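(* Let $(W,\omega^W)$ be a vertex operator algebra and $\omega^1,\omega^2\in\operatorname{Sc}(W,\omega^W)$. If there exists a semi-conformal subalgebra $(U,\omega^2)$ of $(W,\omega^W)$ with $\omega^1\in U$, then $C_W(C_W(\langle\omega^1\rangle))\subseteq C_W(C_W(\langle\omega^2\rangle))$.
   Context: A semi-conformal subalgebra $(U,\omega')$ of a vertex operator algebra $(W,\omega^W)$ is a vertex subalgebra $U$ with a vector $\omega'\in U$ making it a vertex operator algebra such that $\omega^W_n|_U=\omega'_n|_U$ for all $n\ge 0$; $\omega'$ is then a semi-conformal vector, and $\operatorname{Sc}(W,\omega^W)$ is the set of these. $C_W(U)=\{v\in W: u_nv=0\ \forall u\in U,\ n\ge0\}$ is the commutant, and $\langle\omega'\rangle$ is the vertex subalgebra generated by $\omega'$ and $\mathbf 1$. *)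

theory Defs
  imports Complex_Main "HOL-Library.Groups_Big_Fun"
begin

text \<open>The vertex operator of a vertex algebra is encoded by its modes: Y u n v stands for u_n v,
i.e. Y(u,z) v = sum over n of (u_n v) z^(-n-1).\<close>

definition vertex_algebra ::
  "(complex \<Rightarrow> 'v::ab_group_add \<Rightarrow> 'v) \<Rightarrow> 'v set \<Rightarrow> ('v \<Rightarrow> int \<Rightarrow> 'v \<Rightarrow> 'v) \<Rightarrow> 'v \<Rightarrow> bool" where
  "vertex_algebra sc V Y vac \<longleftrightarrow>
     vector_space sc \<and> module.subspace sc V \<and> vac \<in> V \<and>
     (\<forall>u\<in>V. \<forall>v\<in>V. \<forall>n. Y u n v \<in> V) \<and>
     (\<forall>u\<in>V. \<forall>u'\<in>V. \<forall>w\<in>V. \<forall>n a. Y (u + u') n w = Y u n w + Y u' n w \<and> Y (sc a u) n w = sc a (Y u n w)) \<and>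
     (\<forall>u\<in>V. \<forall>w\<in>V. \<forall>w'\<in>V. \<forall>n a. Y u n (w + w') = Y u n w + Y u n w' \<and> Y u n (sc a w) = sc a (Y u n w)) \<and>
     (\<forall>u\<in>V. \<forall>v\<in>V. \<exists>N. \<forall>n\<ge>N. Y u n v = 0) \<and>
     (\<forall>v\<in>V. \<forall>n. Y vac n v = (if n = -1 then v else 0)) \<and>
     (\<forall>v\<in>V. Y v (-1) vac = v \<and> (\<forall>n\<ge>0. Y v n vac = 0)) \<and>
     (\<forall>u\<in>V. \<forall>v\<in>V. \<forall>w\<in>V. \<forall>p q r.
        Sum_any (\<lambda>i::nat. sc (of_int p gchoose i) (Y (Y u (r + int i) v) (p + q - int i) w)) =
        Sum_any (\<lambda>i::nat. sc ((-1) ^ i * (of_int r gchoose i))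
            (Y u (p + r - int i) (Y v (q + int i) w)
             - sc (if even r then 1 else -1) (Y v (q + r - int i) (Y u (p + int i) w)))))"

definition Lop :: "('v \<Rightarrow> int \<Rightarrow> 'v \<Rightarrow> 'v) \<Rightarrow> 'v \<Rightarrow> int \<Rightarrow> 'v \<Rightarrow> 'v" where
  "Lop Y om n = Y om (n + 1)"

definition wt_space ::
  "(complex \<Rightarrow> 'v \<Rightarrow> 'v) \<Rightarrow> 'v set \<Rightarrow> ('v \<Rightarrow> int \<Rightarrow> 'v \<Rightarrow> 'v) \<Rightarrow> 'v \<Rightarrow> int \<Rightarrow> 'v set" where
  "wt_space sc V Y om n = {v \<in> V. Lop Y om 0 v = sc (of_int n) v}"

definition voa ::
  "(complex \<Rightarrow> 'v::ab_group_add \<Rightarrow> 'v) \<Rightarrow> 'v set \<Rightarrow> ('v \<Rightarrow> int \<Rightarrow> 'v \<Rightarrow> 'v) \<Rightarrow> 'v \<Rightarrow> 'v \<Rightarrow> bool" where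
  "voa sc V Y vac om \<longleftrightarrow>
     vertex_algebra sc V Y vac \<and> om \<in> V \<and>
     (\<exists>c::complex. \<forall>v\<in>V. \<forall>m n.
        Lop Y om m (Lop Y om n v) - Lop Y om n (Lop Y om m v) =
        sc (of_int (m - n)) (Lop Y om (m + n) v)
        + (if m + n = 0 then sc ((of_int m ^ 3 - of_int m) / 12 * c) v else 0)) \<and>
     (\<forall>u\<in>V. \<forall>w\<in>V. \<forall>n. Y (Lop Y om (-1) u) n w = sc (- of_int n) (Y u (n - 1) w)) \<and>
     V \<subseteq> module.span sc (\<Union>n. wt_space sc V Y om n) \<and>
     (\<forall>n. \<exists>B. finite B \<and> wt_space sc V Y om n \<subseteq> module.span sc B) \<and>
     (\<exists>N. \<forall>n<N. wt_space sc V Y om n = {0}) \<and>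
     om \<in> wt_space sc V Y om 2"

definition vertex_subalgebra ::
  "(complex \<Rightarrow> 'v::ab_group_add \<Rightarrow> 'v) \<Rightarrow> 'v set \<Rightarrow> ('v \<Rightarrow> int \<Rightarrow> 'v \<Rightarrow> 'v) \<Rightarrow> 'v \<Rightarrow> 'v set \<Rightarrow> bool" where
  "vertex_subalgebra sc W Y vac U \<longleftrightarrow>
     module.subspace sc U \<and> U \<subseteq> W \<and> vac \<in> U \<and> (\<forall>u\<in>U. \<forall>v\<in>U. \<forall>n. Y u n v \<in> U)"

definition semiconf_subalg ::
  "(complex \<Rightarrow> 'v::ab_group_add \<Rightarrow> 'v) \<Rightarrow> 'v set \<Rightarrow> ('v \<Rightarrow> int \<Rightarrow> 'v \<Rightarrow> 'v) \<Rightarrow> 'v \<Rightarrow> 'v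
     \<Rightarrow> 'v set \<Rightarrow> 'v \<Rightarrow> bool" where
  "semiconf_subalg sc W Y vac omW U om' \<longleftrightarrow>
     vertex_subalgebra sc W Y vac U \<and> om' \<in> U \<and> voa sc U Y vac om' \<and>
     (\<forall>n\<ge>0. \<forall>u\<in>U. Y omW n u = Y om' n u)"

definition Sc ::
  "(complex \<Rightarrow> 'v::ab_group_add \<Rightarrow> 'v) \<Rightarrow> 'v set \<Rightarrow> ('v \<Rightarrow> int \<Rightarrow> 'v \<Rightarrow> 'v) \<Rightarrow> 'v \<Rightarrow> 'v \<Rightarrow> 'v set" where
  "Sc sc W Y vac omW = {om'. \<exists>U. semiconf_subalg sc W Y vac omW U om'}"

definition commutant :: "'v::zero set \<Rightarrow> ('v \<Rightarrow> int \<Rightarrow> 'v \<Rightarrow> 'v) \<Rightarrow> 'v set \<Rightarrow> 'v set" where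
  "commutant W Y U = {v \<in> W. \<forall>u\<in>U. \<forall>n\<ge>0. Y u n v = 0}"

inductive_set gen_subalg ::
  "(complex \<Rightarrow> 'v::ab_group_add \<Rightarrow> 'v) \<Rightarrow> ('v \<Rightarrow> int \<Rightarrow> 'v \<Rightarrow> 'v) \<Rightarrow> 'v \<Rightarrow> 'v set \<Rightarrow> 'v set"
  for sc Y vac S where
  gen_base: "x \<in> S \<Longrightarrow> x \<in> gen_subalg sc Y vac S"
| gen_vac: "vac \<in> gen_subalg sc Y vac S"
| gen_zero: "0 \<in> gen_subalg sc Y vac S"
| gen_add: "x \<in> gen_subalg sc Y vac S \<Longrightarrow> y \<in> gen_subalg sc Y vac S \<Longrightarrow> x + y \<in> gen_subalg sc Y vac S"
| gen_scale: "x \<in> gen_subalg sc Y vac S \<Longrightarrow> sc a x \<in> gen_subalg sc Y vac S"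
| gen_prod: "x \<in> gen_subalg sc Y vac S \<Longrightarrow> y \<in> gen_subalg sc Y vac S \<Longrightarrow> Y x n y \<in> gen_subalg sc Y vac S"

end

theory Submission
  imports Defs
begin

lemma Sum_any_single0:
  assumes "\<And>i::nat. i \<noteq> 0 \<Longrightarrow> f i = (0::'v::comm_monoid_add)"
  shows "Sum_any f = f 0"
proof -
  have "{a. f a \<noteq> 0} \<subseteq> {0}" using assms by auto
  then show ?thesis by (simp add: Sum_any.expand_superset[of "{0}"])
qed

lemma antitone_comm:
  "A \<subseteq> B \<Longrightarrow> commutant W Y B \<subseteq> commutant W Y A"
  unfolding commutant_def by auto

lemma gen_sub:
  assumes "vertex_subalgebra sc W Y vac U" "S \<subseteq> U" and md: "module sc"
  shows "gen_subalg sc Y vac S \<subseteq> U"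
proof
  fix x assume "x \<in> gen_subalg sc Y vac S"
  then show "x \<in> U"
  proof induction
    case (gen_base x) then show ?case using assms by auto
  next
    case gen_vac then show ?case using assms unfolding vertex_subalgebra_def by auto
  next
    case gen_zero then show ?case using assms unfolding vertex_subalgebra_def module.subspace_def[OF md] by auto
  next
    case (gen_add x y) then show ?case using assms unfolding vertex_subalgebra_def module.subspace_def[OF md] by auto
  next
    case (gen_scale x a) then show ?case using assms unfolding vertex_subalgebra_def module.subspace_def[OF md] by auto
  next
    case (gen_prod x y n) then show ?case using assms unfolding vertex_subalgebra_def by auto
  qed
qed

theorem lemma2p5:
  fixes sc :: "complex \<Rightarrow> 'v::ab_group_add \<Rightarrow> 'v"
    and W U :: "'v set" and Y :: "'v \<Rightarrow> int \<Rightarrow> 'v \<Rightarrow> 'v"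
    and vac omW om1 om2 :: 'v
  assumes "voa sc W Y vac omW"
    and "om1 \<in> Sc sc W Y vac omW"
    and "om2 \<in> Sc sc W Y vac omW"
    and "semiconf_subalg sc W Y vac omW U om2"
    and "om1 \<in> U"
  shows "commutant W Y (commutant W Y (gen_subalg sc Y vac {om1}))
         \<subseteq> commutant W Y (commutant W Y (gen_subalg sc Y vac {om2}))"
proof -
  have va: "vertex_algebra sc W Y vac" "omW \<in> W"
    and trans: "\<forall>u\<in>W. \<forall>w\<in>W. \<forall>n. Y (Lop Y omW (-1) u) n w = sc (- of_int n) (Y u (n - 1) w)"
    using assms(1) unfolding voa_def by auto
  have vs: "vector_space sc" using va unfolding vertex_algebra_def by auto
  then have md: "module sc" by (simp add: vector_space_def module_def)
  have sub: "vertex_subalgebra sc W Y vac U" "om2 \<in> U"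
    and sconf: "\<forall>n\<ge>0. \<forall>u\<in>U. Y omW n u = Y om2 n u"
    using assms(4) unfolding semiconf_subalg_def by auto
  have UW: "U \<subseteq> W" using sub unfolding vertex_subalgebra_def by auto
  have om2W: "om2 \<in> W" using UW sub by auto
  have bor: "\<And>a b w p q r. a \<in> W \<Longrightarrow> b \<in> W \<Longrightarrow> w \<in> W \<Longrightarrow>
        Sum_any (\<lambda>i::nat. sc (of_int p gchoose i) (Y (Y a (r + int i) b) (p + q - int i) w)) =
        Sum_any (\<lambda>i::nat. sc ((-1) ^ i * (of_int r gchoose i))
            (Y a (p + r - int i) (Y b (q + int i) w)
             - sc (if even r then 1 else -1) (Y b (q + r - int i) (Y a (p + int i) w))))"
    using va(1) unfolding vertex_algebra_def by blast
  have linr: "\<And>u w a n. u \<in> W \<Longrightarrow> w \<in> W \<Longrightarrow> Y u n (sc a w) = sc a (Y u n w)"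
    using va(1) unfolding vertex_algebra_def by blast
  have trunc: "\<And>u v. u \<in> W \<Longrightarrow> v \<in> W \<Longrightarrow> \<exists>N. \<forall>n\<ge>N. Y u n v = 0"
    using va(1) unfolding vertex_algebra_def by blast
  have subW: "module.subspace sc W" using va(1) unfolding vertex_algebra_def by blast
  have zW: "0 \<in> W" using subW unfolding module.subspace_def[OF md] by auto
  have Y0: "\<And>u n. u \<in> W \<Longrightarrow> Y u n 0 = 0"
  proof -
    fix u n assume "u \<in> W"
    have "Y u n (sc 0 0) = sc 0 (Y u n 0)" using linr[OF \<open>u\<in>W\<close> zW] .
    then show "Y u n 0 = 0" using module.scale_zero_left[OF md] by simp
  qed
  have key: "\<And>u v q. u \<in> U \<Longrightarrow> v \<in> W \<Longrightarrow> Y om2 0 v = 0 \<Longrightarrow>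
      Y om2 0 (Y u q v) = sc (- of_int q) (Y u (q - 1) v)"
  proof -
    fix u v q assume u: "u \<in> U" and v: "v \<in> W" and k: "Y om2 0 v = 0"
    have uW: "u \<in> W" using u UW by auto
    note B = bor[OF om2W uW v, where p=0 and q=q and r=0]
    have L: "Sum_any (\<lambda>i::nat. sc (of_int 0 gchoose i) (Y (Y om2 (0 + int i) u) (0 + q - int i) v))
          = Y (Y om2 0 u) q v"
      by (subst Sum_any_single0) (auto simp: gbinomial_0_left module.scale_zero_left[OF md] module.scale_one[OF md])
    have R: "Sum_any (\<lambda>i::nat. sc ((-1) ^ i * (of_int 0 gchoose i))
            (Y om2 (0 + 0 - int i) (Y u (q + int i) v)
             - sc (if even (0::int) then 1 else -1) (Y u (q + 0 - int i) (Y om2 (0 + int i) v))))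
          = Y om2 0 (Y u q v) - Y u q (Y om2 0 v)"
      by (subst Sum_any_single0) (auto simp: gbinomial_0_left module.scale_zero_left[OF md] module.scale_one[OF md])
    have "Y om2 0 (Y u q v) = Y (Y om2 0 u) q v"
      using B L R k Y0[OF uW] by simp
    also have "Y om2 0 u = Y omW 0 u" using sconf u by auto
    also have "Y omW 0 u = Lop Y omW (-1) u" by (simp add: Lop_def)
    also have "Y (Lop Y omW (-1) u) q v = sc (- of_int q) (Y u (q - 1) v)" using trans uW v by blast
    finally show "Y om2 0 (Y u q v) = sc (- of_int q) (Y u (q - 1) v)" .
  qed
  have inC: "\<And>u v n. u \<in> U \<Longrightarrow> v \<in> W \<Longrightarrow> Y om2 0 v = 0 \<Longrightarrow> n \<ge> 0 \<Longrightarrow> Y u n v = 0"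
  proof -
    fix u v and n :: int assume u: "u \<in> U" and v: "v \<in> W" and k: "Y om2 0 v = 0" and n: "n \<ge> 0"
    have uW: "u \<in> W" using u UW by auto
    obtain N where N: "\<forall>n\<ge>N. Y u n v = 0" using trunc[OF uW v] by blast
    define M where "M = max N 1"
    have step: "\<And>k::nat. M - int k \<ge> 0 \<longrightarrow> Y u (M - int k) v = 0"
    proof -
      fix k :: nat show "M - int k \<ge> 0 \<longrightarrow> Y u (M - int k) v = 0"
      proof (induction k)
        case 0 then show ?case using N by (simp add: M_def)
      next
        case (Suc k)
        show ?case
        proof
          assume h: "M - int (Suc k) \<ge> 0"
          define q where "q = M - int k"
          have q1: "q \<ge> 1" using h q_def by simp
          have "Y u q v = 0" using Suc h q_def by simp
          then have "sc (- of_int q) (Y u (q - 1) v) = 0"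
            using key[OF u v k, of q] Y0[OF om2W] by simp
          then have "sc (inverse (- of_int q)) (sc (- of_int q) (Y u (q - 1) v)) = 0"
            using module.scale_zero_right[OF md] by simp
          moreover have "(inverse (- of_int q) * (- of_int q) :: complex) = 1" using q1 by simp
          ultimately have "Y u (q - 1) v = 0"
            using module.scale_scale[OF md] module.scale_one[OF md] by metis
          then show "Y u (M - int (Suc k)) v = 0" using q_def by (simp add: algebra_simps)
        qed
      qed
    qed
    show "Y u n v = 0"
    proof (cases "n \<ge> M")
      case True then show ?thesis using N M_def by auto
    next
      case False
      then have "n = M - int (nat (M - n))" by simp
      then show ?thesis using step[of "nat (M - n)"] n by metis
    qed
  qed
  have C21: "commutant W Y (gen_subalg sc Y vac {om2}) \<subseteq> commutant W Y (gen_subalg sc Y vac {om1})"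
  proof
    fix v assume hv: "v \<in> commutant W Y (gen_subalg sc Y vac {om2})"
    then have v: "v \<in> W" and k: "Y om2 0 v = 0"
      unfolding commutant_def by (auto intro: gen_base)
    have "gen_subalg sc Y vac {om1} \<subseteq> U" using gen_sub[OF sub(1) _ md] assms(5) by auto
    then show "v \<in> commutant W Y (gen_subalg sc Y vac {om1})"
      unfolding commutant_def using v k inC by auto
  qed
  show ?thesis using antitone_comm[OF C21] .
qed

end
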